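(* Consider problem (VP) under the standing assumptions at $\bar x\in Q_0$. Let $\bar x$ be a local Geoffrion properly efficient solution of (VP), let $u\in\mathcal{C}(\bar x)$, and suppose $L^2(Q;\bar x,u)\subset T^2(Q_0;\bar x,u)$. Then there is no $v\in X$ such that $f_i^{\circ}(\bar x,v)+f_i^{\circ\circ}(\bar x,u)\leqq0$ for all $i\in I(\bar x;u)$, $f_i^{\circ}(\bar x,v)+f_i^{\circ\circ}(\bar x,u)<0$ for at least one $i\in I(\bar x;u)$, and $g_j^{\circ}(\bar x,v)+g_j^{\circ\circ}(\bar x,u)\leqq0$ for all $j\in J(\bar x;u)$.
   Context: Standing setting: $X$ is a Banach space; $I=\{1,\dots,p\}$, $J=\{1,\dots,m\}$; $f_i,g_j\colon X\to\mathbb{R}$; (VP) minimizes $f=(f_1,\dots,f_p)$ over $Q_0:=\{x\in X: g_j(x)\leqq 0,\ j\in J\}$. $J(\bar x):=\{j\in J: g_j(\bar x)=0\}$. Standing assumptions: $f_i$ ($i\in I$), $g_j$ ($j\in J(\bar x)$) locally Lipschitz at $\bar x$; $g_j$ ($j\notin J(\bar x)$) continuous at $\bar x$. $F^{\circ}(\bar x,u):=\limsup_{x\to\bar x,\,t\downarrow0}\frac{F(x+tu)-F(x)}{t}$; $F^{\circ\circ}(\bar x,u):=\limsup_{t\downarrow0}\frac{F(\bar x+tu)-F(\bar x)-tF^{\circ}(\bar x,u)}{\frac12t^2}$. $I(\bar x;u):=\{i\in I: f_i^{\circ}(\bar x,u)=0\}$, $J(\bar x;u):=\{j\in J(\bar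 x): g_j^{\circ}(\bar x,u)=0\}$. Lexicographic order on $\mathbb{R}^2$: $a\leqq_{\rm lex}b$ iff $a_1<b_1$ or ($a_1=b_1$, $a_2\leqq b_2$). $F_i^2(\bar x;u,v):=(f_i^{\circ}(\bar x,u),\, f_i^{\circ}(\bar x,v)+f_i^{\circ\circ}(\bar x,u))$, $G_j^2(\bar x;u,v):=(g_j^{\circ}(\bar x,u),\, g_j^{\circ}(\bar x,v)+g_j^{\circ\circ}(\bar x,u))$. $Q:=Q_0\cap\{x: f_i(x)\leqq f_i(\bar x),\ i\in I\}$; $L^2(Q;\bar x,u):=\{v: F_i^2(\bar x;u,v)\leqq_{\rm lex}(0,0)\ \forall i\in I,\ G_j^2(\bar x;u,v)\leqq_{\rm lex}(0,0)\ \forall j\in J(\bar x)\}$. $T^2(\Omega;\bar x,u):=\{v: \exists t_k\downarrow0,\ \exists v^k\to v,\ \bar x+t_ku+\frac12t_k^2v^k\in\Omega\ \forall k\}$. Critical direction: $u$ with $f_i^{\circ}(\bar x,u)\leqq0$ for all $i$, $=0$ for some $i$, and $g_j^{\circ}(\bar x,u)\leqq0$ for all $j\in J(\bar x)$; $\mathcal{C}(\bar x)$ is the set of these. Local Geoffrion properly efficient solution: there is a neighborhood $U$ of $\bar x$ such that (a) no $x\in U\cap Q_0$ has $f(x)\leqq f(\bar x)$ componentwise with $f(x)\ne f(\bar x)$, and (b) there is $M>0$ such that for every $i\in I$ and every $x\in U\cap Q_0$ with $f_i(x)<f_i(\bar x)$ there exists $j\in I$ with $f_j(x)>f_j(\bar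 x)$ and $\frac{f_i(\bar x)-f_i(x)}{f_j(x)-f_j(\bar x)}\leqq M$. *)

theory Defs
  imports "HOL-Analysis.Analysis"
begin

definition clarke_dd :: "('a::real_normed_vector \<Rightarrow> real) \<Rightarrow> 'a \<Rightarrow> 'a \<Rightarrow> ereal" where
  "clarke_dd F x u =
     Limsup (at (x, 0) within (UNIV \<times> {0<..}))
       (\<lambda>(y, t). ereal ((F (y + t *\<^sub>R u) - F y) / t))"

definition clarke_dd2 :: "('a::real_normed_vector \<Rightarrow> real) \<Rightarrow> 'a \<Rightarrow> 'a \<Rightarrow> ereal" where
  "clarke_dd2 F x u =
     Limsup (at_right 0)
       (\<lambda>t. (ereal (F (x + t *\<^sub>R u) - F x) - ereal t * clarke_dd F x u) / ereal (t\<^sup>2 / 2))"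

definition locally_lipschitz_at :: "('a::real_normed_vector \<Rightarrow> real) \<Rightarrow> 'a \<Rightarrow> bool" where
  "locally_lipschitz_at F x \<longleftrightarrow>
     (\<exists>\<delta>>0. \<exists>L. \<forall>y\<in>ball x \<delta>. \<forall>z\<in>ball x \<delta>. \<bar>F y - F z\<bar> \<le> L * norm (y - z))"

definition lex_le :: "ereal \<times> ereal \<Rightarrow> ereal \<times> ereal \<Rightarrow> bool" where
  "lex_le a b \<longleftrightarrow> fst a < fst b \<or> (fst a = fst b \<and> snd a \<le> snd b)"

definition feasible_set :: "nat \<Rightarrow> (nat \<Rightarrow> 'a \<Rightarrow> real) \<Rightarrow> 'a set" where
  "feasible_set m g = {x. \<forall>j\<in>{1..m}. g j x \<le> 0}"

definition active_set :: "nat \<Rightarrow> (nat \<Rightarrow> 'a \<Rightarrow> real) \<Rightarrow> 'a \<Rightarrow> nat set" where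
  "active_set m g xb = {j\<in>{1..m}. g j xb = 0}"

definition second_order_tangent_set :: "'a::real_normed_vector set \<Rightarrow> 'a \<Rightarrow> 'a \<Rightarrow> 'a set" where
  "second_order_tangent_set \<Omega> xb u =
     {v. \<exists>t vs. (\<forall>k. t k > 0) \<and> t \<longlonglongrightarrow> 0 \<and> vs \<longlonglongrightarrow> v \<and>
            (\<forall>k. xb + t k *\<^sub>R u + ((t k)\<^sup>2 / 2) *\<^sub>R vs k \<in> \<Omega>)}"

definition lin_cone2 :: "nat \<Rightarrow> nat \<Rightarrow> (nat \<Rightarrow> 'a::real_normed_vector \<Rightarrow> real) \<Rightarrow> (nat \<Rightarrow> 'a \<Rightarrow> real) \<Rightarrow> 'a \<Rightarrow> 'a \<Rightarrow> 'a set" where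
  "lin_cone2 p m f g xb u =
     {v. (\<forall>i\<in>{1..p}. lex_le (clarke_dd (f i) xb u, clarke_dd (f i) xb v + clarke_dd2 (f i) xb u) (0, 0))
       \<and> (\<forall>j\<in>active_set m g xb. lex_le (clarke_dd (g j) xb u, clarke_dd (g j) xb v + clarke_dd2 (g j) xb u) (0, 0))}"

definition critical_dirs :: "nat \<Rightarrow> nat \<Rightarrow> (nat \<Rightarrow> 'a::real_normed_vector \<Rightarrow> real) \<Rightarrow> (nat \<Rightarrow> 'a \<Rightarrow> real) \<Rightarrow> 'a \<Rightarrow> 'a set" where
  "critical_dirs p m f g xb =
     {u. (\<forall>i\<in>{1..p}. clarke_dd (f i) xb u \<le> 0) \<and> (\<exists>i\<in>{1..p}. clarke_dd (f i) xb u = 0)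
       \<and> (\<forall>j\<in>active_set m g xb. clarke_dd (g j) xb u \<le> 0)}"

definition local_geoffrion_proper :: "nat \<Rightarrow> nat \<Rightarrow> (nat \<Rightarrow> 'a::real_normed_vector \<Rightarrow> real) \<Rightarrow> (nat \<Rightarrow> 'a \<Rightarrow> real) \<Rightarrow> 'a \<Rightarrow> bool" where
  "local_geoffrion_proper p m f g xb \<longleftrightarrow>
     (\<exists>U. open U \<and> xb \<in> U \<and>
        \<not> (\<exists>x\<in>U \<inter> feasible_set m g. (\<forall>i\<in>{1..p}. f i x \<le> f i xb) \<and> (\<exists>i\<in>{1..p}. f i x \<noteq> f i xb)) \<and>
        (\<exists>M>0. \<forall>i\<in>{1..p}. \<forall>x\<in>U \<inter> feasible_set m g. f i x < f i xb \<longrightarrow>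
            (\<exists>j\<in>{1..p}. f j x > f j xb \<and> (f i xb - f i x) / (f j x - f j xb) \<le> M)))"

end

theory Submission
  imports Defs
begin

lemma lip_abs:
  assumes "locally_lipschitz_at F xb"
  obtains d L where "d > 0" "L \<ge> 0" "\<forall>y\<in>ball xb d. \<forall>z\<in>ball xb d. \<bar>F y - F z\<bar> \<le> L * norm (y - z)"
proof -
  obtain d L where d: "d > 0" "\<forall>y\<in>ball xb d. \<forall>z\<in>ball xb d. \<bar>F y - F z\<bar> \<le> L * norm (y - z)"
    using assms unfolding locally_lipschitz_at_def by blast
  have "\<forall>y\<in>ball xb d. \<forall>z\<in>ball xb d. \<bar>F y - F z\<bar> \<le> \<bar>L\<bar> * norm (y - z)"
  proof (intro ballI)
    fix y z assume "y \<in> ball xb d" "z \<in> ball xb d"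
    then have "\<bar>F y - F z\<bar> \<le> L * norm (y - z)" using d by blast
    also have "\<dots> \<le> \<bar>L\<bar> * norm (y - z)" by (intro mult_right_mono) auto
    finally show "\<bar>F y - F z\<bar> \<le> \<bar>L\<bar> * norm (y - z)" .
  qed
  then show ?thesis using that d(1) by (meson abs_ge_zero)
qed

lemma ev_ball:
  fixes X :: "nat \<Rightarrow> 'a::real_normed_vector"
  assumes "X \<longlonglongrightarrow> xb" "d > 0"
  shows "eventually (\<lambda>k. X k \<in> ball xb d) sequentially"
  using assms by (intro topological_tendstoD) auto

lemma first_order:
  fixes F :: "'a::real_normed_vector \<Rightarrow> real"
  assumes lip: "locally_lipschitz_at F xb" and neg: "clarke_dd F xb u < 0"
    and tpos: "\<forall>k. t k > 0" and t0: "t \<longlonglongrightarrow> 0" and wv: "w \<longlonglongrightarrow> v"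
  shows "eventually (\<lambda>k. F (xb + t k *\<^sub>R u + ((t k)\<^sup>2 / 2) *\<^sub>R w k) < F xb) sequentially"
proof -
  obtain c where c: "clarke_dd F xb u < ereal c" "c < 0"
    using ereal_dense2[OF neg] by (auto simp: zero_ereal_def)
  have ev1: "eventually (\<lambda>p. (\<lambda>(y, s). ereal ((F (y + s *\<^sub>R u) - F y) / s)) p < ereal c)
      (at (xb, 0) within (UNIV \<times> {0<..}))"
    using c(1) unfolding clarke_dd_def by (rule Limsup_lessD)
  have fl: "filterlim (\<lambda>k. (xb, t k)) (at (xb, 0) within (UNIV \<times> {0<..})) sequentially"
    unfolding filterlim_at using tpos t0 by (auto intro!: tendsto_Pair always_eventually simp: less_imp_neq[symmetric])
  have ev2: "eventually (\<lambda>k. (F (xb + t k *\<^sub>R u) - F xb) / t k < c) sequentially"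
    using filterlim_iff[THEN iffD1, OF fl, rule_format, OF ev1] by simp
  obtain d L where dL: "d > 0" "L \<ge> 0" "\<forall>y\<in>ball xb d. \<forall>z\<in>ball xb d. \<bar>F y - F z\<bar> \<le> L * norm (y - z)"
    using lip_abs[OF lip] by blast
  have "(\<lambda>k. xb + t k *\<^sub>R u + ((t k)\<^sup>2 / 2) *\<^sub>R w k) \<longlonglongrightarrow> xb + 0 *\<^sub>R u + ((0::real)\<^sup>2/2) *\<^sub>R v"
    by (intro tendsto_intros t0 wv) auto
  then have ev3: "eventually (\<lambda>k. xb + t k *\<^sub>R u + ((t k)\<^sup>2 / 2) *\<^sub>R w k \<in> ball xb d) sequentially"
    using ev_ball dL(1) by fastforce
  have "(\<lambda>k. xb + t k *\<^sub>R u) \<longlonglongrightarrow> xb + 0 *\<^sub>R u"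
    by (intro tendsto_intros t0)
  then have ev4: "eventually (\<lambda>k. xb + t k *\<^sub>R u \<in> ball xb d) sequentially"
    using ev_ball dL(1) by fastforce
  have "(\<lambda>k. L * t k * norm (w k) / 2) \<longlonglongrightarrow> L * 0 * norm v / 2"
    by (intro tendsto_intros t0 wv) auto
  then have lim5: "(\<lambda>k. L * t k * norm (w k) / 2) \<longlonglongrightarrow> 0" by simp
  have ev5: "eventually (\<lambda>k. L * t k * norm (w k) / 2 < - c) sequentially"
    by (rule order_tendstoD(2)[OF lim5]) (use c(2) in auto)
  show ?thesis
    using ev2 ev3 ev4 ev5
  proof eventually_elim
    case (elim k)
    let ?p = "xb + t k *\<^sub>R u + ((t k)\<^sup>2 / 2) *\<^sub>R w k" and ?q = "xb + t k *\<^sub>R u"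
    have tk: "t k > 0" using tpos by auto
    have "\<bar>F ?p - F ?q\<bar> \<le> L * norm (?p - ?q)" using dL(3) elim by blast
    also have "norm (?p - ?q) = (t k)\<^sup>2 / 2 * norm (w k)" by simp
    finally have a0: "F ?p - F ?q \<le> L * ((t k)\<^sup>2 / 2 * norm (w k))" by linarith
    have "L * ((t k)\<^sup>2 / 2 * norm (w k)) = t k * (L * t k * norm (w k) / 2)"
      by (simp add: power2_eq_square algebra_simps)
    with a0 have a: "F ?p - F ?q \<le> t k * (L * t k * norm (w k) / 2)" by linarith
    have b: "F ?q - F xb < c * t k" using elim(1) tk by (simp add: divide_less_eq)
    have "F ?p - F xb < t k * (L * t k * norm (w k) / 2 + c)"
      using a b by (simp add: algebra_simps)
    also have "\<dots> < 0" using elim(4) tk by (intro mult_pos_neg) auto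
    finally show ?case by simp
  qed
qed

lemma ereal_split_sum:
  fixes a b :: ereal
  assumes "a + b < ereal r"
  obtains c1 c2 where "a < ereal c1" "b < ereal c2" "c1 + c2 < r"
proof (cases a; cases b)
  fix x y assume ab: "a = ereal x" "b = ereal y"
  then have "x + y < r" using assms by simp
  then show ?thesis using ab
    by (intro that[of "x + (r - x - y)/3" "y + (r - x - y)/3"]) (auto simp: field_simps)
next
  fix x assume ab: "a = ereal x" "b = -\<infinity>"
  then show ?thesis by (intro that[of "x + 1" "r - x - 2"]) auto
next
  fix y assume ab: "a = -\<infinity>" "b = ereal y"
  then show ?thesis by (intro that[of "r - y - 2" "y + 1"]) auto
next
  assume ab: "a = -\<infinity>" "b = -\<infinity>"
  then show ?thesis by (intro that[of "r - 2" "1"]) auto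
qed (use assms in auto)

lemma second_order:
  fixes F :: "'a::real_normed_vector \<Rightarrow> real"
  assumes lip: "locally_lipschitz_at F xb" and z: "clarke_dd F xb u = 0"
    and sr: "clarke_dd F xb v + clarke_dd2 F xb u < ereal r"
    and tpos: "\<forall>k. t k > 0" and t0: "t \<longlonglongrightarrow> 0" and wv: "w \<longlonglongrightarrow> v"
  shows "eventually (\<lambda>k. F (xb + t k *\<^sub>R u + ((t k)\<^sup>2 / 2) *\<^sub>R w k) - F xb \<le> r * ((t k)\<^sup>2 / 2)) sequentially"
proof -
  obtain c1 c2 where c: "clarke_dd F xb v < ereal c1" "clarke_dd2 F xb u < ereal c2" "c1 + c2 < r"
    using ereal_split_sum[OF sr] by blast
  define e where "e = r - c1 - c2"
  have e: "e > 0" using c(3) by (simp add: e_def)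
  have ev1: "eventually (\<lambda>p. (\<lambda>(y, s). ereal ((F (y + s *\<^sub>R v) - F y) / s)) p < ereal c1)
      (at (xb, 0) within (UNIV \<times> {0<..}))"
    using c(1) unfolding clarke_dd_def by (rule Limsup_lessD)
  have "(\<lambda>k. (xb + t k *\<^sub>R u, (t k)\<^sup>2 / 2)) \<longlonglongrightarrow> (xb + 0 *\<^sub>R u, (0::real)\<^sup>2 / 2)"
    by (intro tendsto_intros t0) auto
  then have "(\<lambda>k. (xb + t k *\<^sub>R u, (t k)\<^sup>2 / 2)) \<longlonglongrightarrow> (xb, 0)" by simp
  then have fl: "filterlim (\<lambda>k. (xb + t k *\<^sub>R u, (t k)\<^sup>2 / 2)) (at (xb, 0) within (UNIV \<times> {0<..})) sequentially"
    unfolding filterlim_at using tpos by (auto intro!: always_eventually simp: less_imp_neq[symmetric])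
  have ev2: "eventually (\<lambda>k. (F (xb + t k *\<^sub>R u + ((t k)\<^sup>2 / 2) *\<^sub>R v) - F (xb + t k *\<^sub>R u)) / ((t k)\<^sup>2 / 2) < c1) sequentially"
    using filterlim_iff[THEN iffD1, OF fl, rule_format, OF ev1] by simp
  have ev1': "eventually (\<lambda>s. (ereal (F (xb + s *\<^sub>R u) - F xb) - ereal s * clarke_dd F xb u) / ereal (s\<^sup>2 / 2) < ereal c2) (at_right 0)"
    using c(2) unfolding clarke_dd2_def by (rule Limsup_lessD)
  have flt: "filterlim t (at_right 0) sequentially"
    using tpos t0 by (intro tendsto_imp_filterlim_at_right) (auto intro!: always_eventually)
  have ev3: "eventually (\<lambda>k. (ereal (F (xb + t k *\<^sub>R u) - F xb) - ereal (t k) * clarke_dd F xb u) / ereal ((t k)\<^sup>2 / 2) < ereal c2) sequentially"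
    using filterlim_iff[THEN iffD1, OF flt, rule_format, OF ev1'] by simp
  have ev3': "eventually (\<lambda>k. F (xb + t k *\<^sub>R u) - F xb < c2 * ((t k)\<^sup>2 / 2)) sequentially"
    using ev3
  proof eventually_elim
    case (elim k)
    have tk: "t k > 0" using tpos by auto
    then have "(F (xb + t k *\<^sub>R u) - F xb) / ((t k)\<^sup>2 / 2) < c2" using elim z by simp
    then show ?case using tk by (simp add: divide_less_eq)
  qed
  obtain d L where dL: "d > 0" "L \<ge> 0" "\<forall>y\<in>ball xb d. \<forall>z\<in>ball xb d. \<bar>F y - F z\<bar> \<le> L * norm (y - z)"
    using lip_abs[OF lip] by blast
  have "(\<lambda>k. xb + t k *\<^sub>R u + ((t k)\<^sup>2 / 2) *\<^sub>R w k) \<longlonglongrightarrow> xb + 0 *\<^sub>R u + ((0::real)\<^sup>2/2) *\<^sub>R v"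
    by (intro tendsto_intros t0 wv) auto
  then have ev4: "eventually (\<lambda>k. xb + t k *\<^sub>R u + ((t k)\<^sup>2 / 2) *\<^sub>R w k \<in> ball xb d) sequentially"
    using ev_ball dL(1) by fastforce
  have "(\<lambda>k. xb + t k *\<^sub>R u + ((t k)\<^sup>2 / 2) *\<^sub>R v) \<longlonglongrightarrow> xb + 0 *\<^sub>R u + ((0::real)\<^sup>2/2) *\<^sub>R v"
    by (intro tendsto_intros t0) auto
  then have ev5: "eventually (\<lambda>k. xb + t k *\<^sub>R u + ((t k)\<^sup>2 / 2) *\<^sub>R v \<in> ball xb d) sequentially"
    using ev_ball dL(1) by fastforce
  have "(\<lambda>k. L * norm (w k - v)) \<longlonglongrightarrow> L * norm (v - v)"
    by (intro tendsto_intros wv)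
  then have lim6: "(\<lambda>k. L * norm (w k - v)) \<longlonglongrightarrow> 0" by simp
  have ev6: "eventually (\<lambda>k. L * norm (w k - v) < e) sequentially"
    by (rule order_tendstoD(2)[OF lim6]) (use e in auto)
  show ?thesis
    using ev2 ev3' ev4 ev5 ev6
  proof eventually_elim
    case (elim k)
    let ?s = "(t k)\<^sup>2 / 2"
    let ?p = "xb + t k *\<^sub>R u + ?s *\<^sub>R w k" and ?q = "xb + t k *\<^sub>R u + ?s *\<^sub>R v"
      and ?y = "xb + t k *\<^sub>R u"
    have s: "?s > 0" using tpos[rule_format, of k] by simp
    have "\<bar>F ?p - F ?q\<bar> \<le> L * norm (?p - ?q)" using dL(3) elim by blast
    also have "?p - ?q = ?s *\<^sub>R (w k - v)" by (simp add: algebra_simps)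
    also have "L * norm (?s *\<^sub>R (w k - v)) = ?s * (L * norm (w k - v))" using s by simp
    also have "\<dots> \<le> ?s * e" using elim(5) s by (intro mult_left_mono) auto
    finally have a: "F ?p - F ?q \<le> ?s * e" by linarith
    have b: "F ?q - F ?y < c1 * ?s" using elim(1) s by (simp add: divide_less_eq)
    have "F ?p - F xb \<le> ?s * e + c1 * ?s + c2 * ?s" using a b elim(2) by linarith
    also have "\<dots> = r * ?s" by (simp add: e_def field_simps)
    finally show ?case .
  qed
qed

theorem corollary5p2:
  fixes p m :: nat
    and f g :: "nat \<Rightarrow> 'a::banach \<Rightarrow> real"
    and xb u :: 'a
  assumes feas: "xb \<in> feasible_set m g"
    and lip_f: "\<forall>i\<in>{1..p}. locally_lipschitz_at (f i) xb"
    and lip_g: "\<forall>j\<in>active_set m g xb. locally_lipschitz_at (g j) xb"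
    and cont_g: "\<forall>j\<in>{1..m} - active_set m g xb. isCont (g j) xb"
    and geof: "local_geoffrion_proper p m f g xb"
    and crit: "u \<in> critical_dirs p m f g xb"
    and cq: "lin_cone2 p m f g xb u \<subseteq> second_order_tangent_set (feasible_set m g) xb u"
  shows "\<not> (\<exists>v. (\<forall>i\<in>{i\<in>{1..p}. clarke_dd (f i) xb u = 0}.
                   clarke_dd (f i) xb v + clarke_dd2 (f i) xb u \<le> 0)
              \<and> (\<exists>i\<in>{i\<in>{1..p}. clarke_dd (f i) xb u = 0}.
                   clarke_dd (f i) xb v + clarke_dd2 (f i) xb u < 0)
              \<and> (\<forall>j\<in>{j\<in>active_set m g xb. clarke_dd (g j) xb u = 0}.
                   clarke_dd (g j) xb v + clarke_dd2 (g j) xb u \<le> 0))"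
proof
  assume "\<exists>v. (\<forall>i\<in>{i\<in>{1..p}. clarke_dd (f i) xb u = 0}.
                   clarke_dd (f i) xb v + clarke_dd2 (f i) xb u \<le> 0)
              \<and> (\<exists>i\<in>{i\<in>{1..p}. clarke_dd (f i) xb u = 0}.
                   clarke_dd (f i) xb v + clarke_dd2 (f i) xb u < 0)
              \<and> (\<forall>j\<in>{j\<in>active_set m g xb. clarke_dd (g j) xb u = 0}.
                   clarke_dd (g j) xb v + clarke_dd2 (g j) xb u \<le> 0)"
  then obtain v where H: "(\<forall>i\<in>{i\<in>{1..p}. clarke_dd (f i) xb u = 0}.
                   clarke_dd (f i) xb v + clarke_dd2 (f i) xb u \<le> 0)
              \<and> (\<exists>i\<in>{i\<in>{1..p}. clarke_dd (f i) xb u = 0}.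
                   clarke_dd (f i) xb v + clarke_dd2 (f i) xb u < 0)
              \<and> (\<forall>j\<in>{j\<in>active_set m g xb. clarke_dd (g j) xb u = 0}.
                   clarke_dd (g j) xb v + clarke_dd2 (g j) xb u \<le> 0)" by blast
  have H1: "\<forall>i\<in>{1..p}. clarke_dd (f i) xb u = 0 \<longrightarrow> clarke_dd (f i) xb v + clarke_dd2 (f i) xb u \<le> 0"
    using H by blast
  have H2: "\<exists>i\<in>{1..p}. clarke_dd (f i) xb u = 0 \<and> clarke_dd (f i) xb v + clarke_dd2 (f i) xb u < 0"
    using H by blast
  have H3: "\<forall>j\<in>active_set m g xb. clarke_dd (g j) xb u = 0 \<longrightarrow> clarke_dd (g j) xb v + clarke_dd2 (g j) xb u \<le> 0"
    using H by blast
  obtain i0 where i0: "i0 \<in> {1..p}" "clarke_dd (f i0) xb u = 0"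
    "clarke_dd (f i0) xb v + clarke_dd2 (f i0) xb u < 0" using H2 by blast
  have cf: "\<forall>i\<in>{1..p}. clarke_dd (f i) xb u \<le> 0" and cg: "\<forall>j\<in>active_set m g xb. clarke_dd (g j) xb u \<le> 0"
    using crit unfolding critical_dirs_def by auto
  have "v \<in> lin_cone2 p m f g xb u"
    unfolding lin_cone2_def lex_le_def
  proof (intro CollectI conjI ballI)
    fix i assume i: "i \<in> {1..p}"
    show "fst (clarke_dd (f i) xb u, clarke_dd (f i) xb v + clarke_dd2 (f i) xb u) < fst (0::ereal, 0::ereal) \<or>
       fst (clarke_dd (f i) xb u, clarke_dd (f i) xb v + clarke_dd2 (f i) xb u) = fst (0::ereal, 0::ereal) \<and>
       snd (clarke_dd (f i) xb u, clarke_dd (f i) xb v + clarke_dd2 (f i) xb u) \<le> snd (0::ereal, 0::ereal)"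
      using cf[rule_format, OF i] H1[rule_format, OF i] by (cases "clarke_dd (f i) xb u = 0") (auto simp: less_le)
  next
    fix j assume j: "j \<in> active_set m g xb"
    show "fst (clarke_dd (g j) xb u, clarke_dd (g j) xb v + clarke_dd2 (g j) xb u) < fst (0::ereal, 0::ereal) \<or>
       fst (clarke_dd (g j) xb u, clarke_dd (g j) xb v + clarke_dd2 (g j) xb u) = fst (0::ereal, 0::ereal) \<and>
       snd (clarke_dd (g j) xb u, clarke_dd (g j) xb v + clarke_dd2 (g j) xb u) \<le> snd (0::ereal, 0::ereal)"
      using cg[rule_format, OF j] H3[rule_format, OF j] by (cases "clarke_dd (g j) xb u = 0") (auto simp: less_le)
  qed
  with cq have "v \<in> second_order_tangent_set (feasible_set m g) xb u" by blast
  then obtain t vs where tpos: "\<forall>k. t k > 0" and t0: "t \<longlonglongrightarrow> 0" and wv: "vs \<longlonglongrightarrow> v"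
    and xin: "\<forall>k. xb + t k *\<^sub>R u + ((t k)\<^sup>2 / 2) *\<^sub>R vs k \<in> feasible_set m g"
    unfolding second_order_tangent_set_def by blast
  define x where "x k = xb + t k *\<^sub>R u + ((t k)\<^sup>2 / 2) *\<^sub>R vs k" for k
  obtain U M where U: "open U" "xb \<in> U" and M: "M > 0"
    and G: "\<forall>i\<in>{1..p}. \<forall>x\<in>U \<inter> feasible_set m g. f i x < f i xb \<longrightarrow>
            (\<exists>j\<in>{1..p}. f j x > f j xb \<and> (f i xb - f i x) / (f j x - f j xb) \<le> M)"
    using geof unfolding local_geoffrion_proper_def by blast
  obtain r where r: "clarke_dd (f i0) xb v + clarke_dd2 (f i0) xb u < ereal r" "r < 0"
    using ereal_dense2[OF i0(3)] by (auto simp: zero_ereal_def)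
  define e where "e = - r / (2 * M)"
  have e: "e > 0" using r(2) M by (simp add: e_def divide_neg_pos)
  have "x \<longlonglongrightarrow> xb + 0 *\<^sub>R u + ((0::real)\<^sup>2/2) *\<^sub>R v"
    unfolding x_def by (intro tendsto_intros t0 wv) auto
  then have evU: "eventually (\<lambda>k. x k \<in> U) sequentially"
    using U by (intro topological_tendstoD) auto
  have ev0: "eventually (\<lambda>k. f i0 (x k) - f i0 xb \<le> r * ((t k)\<^sup>2 / 2)) sequentially"
    unfolding x_def using second_order[OF _ i0(2) r(1) tpos t0 wv] lip_f i0(1) by blast
  have evall: "eventually (\<lambda>k. \<forall>j\<in>{1..p}. f j (x k) - f j xb \<le> e * ((t k)\<^sup>2 / 2)) sequentially"
  proof (rule eventually_ball_finite, simp, rule ballI)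
    fix j assume j: "j \<in> {1..p}"
    have lj: "locally_lipschitz_at (f j) xb" using lip_f j by blast
    show "eventually (\<lambda>k. f j (x k) - f j xb \<le> e * ((t k)\<^sup>2 / 2)) sequentially"
    proof (cases "clarke_dd (f j) xb u = 0")
      case True
      have "clarke_dd (f j) xb v + clarke_dd2 (f j) xb u < ereal e"
        using H1 j True e by (metis ereal_less(2) order_le_less_trans)
      then show ?thesis unfolding x_def using second_order[OF lj True _ tpos t0 wv] by blast
    next
      case False
      then have "clarke_dd (f j) xb u < 0" using cf[rule_format, OF j] by (simp add: less_le)
      from first_order[OF lj this tpos t0 wv] show ?thesis
      proof (rule eventually_mono)
        fix k assume "f j (xb + t k *\<^sub>R u + ((t k)\<^sup>2 / 2) *\<^sub>R vs k) < f j xb"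
        moreover have "e * ((t k)\<^sup>2 / 2) \<ge> 0" using e by simp
        ultimately show "f j (x k) - f j xb \<le> e * ((t k)\<^sup>2 / 2)" unfolding x_def by linarith
      qed
    qed
  qed
  from evU ev0 evall have "eventually (\<lambda>k. x k \<in> U \<and> f i0 (x k) - f i0 xb \<le> r * ((t k)\<^sup>2 / 2)
      \<and> (\<forall>j\<in>{1..p}. f j (x k) - f j xb \<le> e * ((t k)\<^sup>2 / 2))) sequentially"
    by eventually_elim blast
  then obtain N where "\<forall>n\<ge>N. x n \<in> U \<and> f i0 (x n) - f i0 xb \<le> r * ((t n)\<^sup>2 / 2)
      \<and> (\<forall>j\<in>{1..p}. f j (x n) - f j xb \<le> e * ((t n)\<^sup>2 / 2))"
    unfolding eventually_sequentially by blast
  then obtain k where k: "x k \<in> U" "f i0 (x k) - f i0 xb \<le> r * ((t k)\<^sup>2 / 2)"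
    "\<forall>j\<in>{1..p}. f j (x k) - f j xb \<le> e * ((t k)\<^sup>2 / 2)"
    by blast
  define s where "s = (t k)\<^sup>2 / 2"
  have s: "s > 0" unfolding s_def using tpos[rule_format, of k] by simp
  have rs: "r * s < 0" using r(2) s by (simp add: mult_neg_pos)
  have xf: "x k \<in> U \<inter> feasible_set m g" using k(1) xin unfolding x_def by blast
  have "f i0 (x k) < f i0 xb" using k(2) rs unfolding s_def by linarith
  then obtain j where j: "j \<in> {1..p}" "f j (x k) > f j xb"
    "(f i0 xb - f i0 (x k)) / (f j (x k) - f j xb) \<le> M"
    using G i0(1) xf by blast
  define D where "D = f j (x k) - f j xb"
  have D: "D > 0" "D \<le> e * s" using j(2) k(3) j(1) unfolding D_def s_def by auto
  have "f i0 xb - f i0 (x k) \<le> M * D" using j(3) D(1) unfolding D_def by (simp add: divide_le_eq)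
  also have "\<dots> \<le> M * (e * s)" using D(2) M by (intro mult_left_mono) auto
  also have "\<dots> = - r * s / 2" using M by (simp add: e_def field_simps)
  finally have "f i0 xb - f i0 (x k) \<le> - r * s / 2" .
  moreover have "f i0 xb - f i0 (x k) \<ge> - r * s" using k(2) unfolding s_def by linarith
  ultimately show False using rs by linarith
qed

end
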